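(* Let $p\geq 5$ be a prime and $r$ a positive integer such that $3$ does not divide $p^r+1$. Then the function $A(x)=x^{p^r+2}$ on $\mathbb{F}_{p^{2r}}$ is not EA-equivalent to $x^3$.
   Context: An additive function on $\mathbb{F}_{q}$ is one satisfying $L(x+y)=L(x)+L(y)$ for all $x,y$; an affine function is an additive function plus a constant. Two functions $f_1,f_2:\mathbb{F}_{q}\to\mathbb{F}_{q}$ are extended affine (EA) equivalent if there exist affine functions $l_1,l_2,l_3$ with $l_1,l_2$ permutations of $\mathbb{F}_{q}$ such that $f_1(x)=l_1(f_2(l_2(x)))+l_3(x)$ for all $x$. *)

theory Defs
  imports Main "HOL-Computational_Algebra.Primes"
begin

definition additive :: "('a::field \<Rightarrow> 'a) \<Rightarrow> bool" where
  "additive L \<longleftrightarrow> (\<forall>x y. L (x + y) = L x + L y)"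

definition affine :: "('a::field \<Rightarrow> 'a) \<Rightarrow> bool" where
  "affine l \<longleftrightarrow> (\<exists>L c. additive L \<and> (\<forall>x. l x = L x + c))"

definition EA_equivalent :: "('a::field \<Rightarrow> 'a) \<Rightarrow> ('a \<Rightarrow> 'a) \<Rightarrow> bool" where
  "EA_equivalent f1 f2 \<longleftrightarrow>
     (\<exists>l1 l2 l3. affine l1 \<and> affine l2 \<and> affine l3 \<and> bij l1 \<and> bij l2 \<and>
        (\<forall>x. f1 x = l1 (f2 (l2 x)) + l3 x))"

end

theory Submission
  imports Defs "HOL-Number_Theory.Residues" "HOL-Computational_Algebra.Polynomial"
begin

lemma additive_0: "Defs.additive L \<Longrightarrow> L 0 = 0"
  unfolding Defs.additive_def by (metis add_cancel_right_right add.right_neutral)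

lemma additive_neg: "Defs.additive L \<Longrightarrow> L (- x) = - L x"
  unfolding Defs.additive_def by (metis add.right_inverse additive_0 Defs.additive_def eq_neg_iff_add_eq_0)

lemma additive_diff: "Defs.additive L \<Longrightarrow> L (x - y) = L x - L y"
  by (metis Defs.additive_def additive_neg diff_conv_add_uminus)

lemma additive_add: "Defs.additive L \<Longrightarrow> L (x + y) = L x + L y"
  unfolding Defs.additive_def by blast

lemma cube_delta:
  fixes A B C d :: "'a::comm_ring_1"
  shows "(A+B+C+d)^3 - (A+B+d)^3 - (A+C+d)^3 - (B+C+d)^3 + (A+d)^3 + (B+d)^3 + (C+d)^3 - d^3
        = 6 * (A*B*C)"
  by (simp add: power3_eq_cube algebra_simps)

lemma quad_delta:
  fixes A B C a b c :: "'a::comm_ring_1"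
  shows "(A+B+C)*(a+b+c)^2 - (A+B)*(a+b)^2 - (A+C)*(a+c)^2 - (B+C)*(b+c)^2
        + A*a^2 + B*b^2 + C*c^2 = 2*(A*b*c + B*a*c + C*a*b)"
  by (simp add: power2_eq_square algebra_simps)

lemma decode:
  fixes \<alpha> \<beta> \<alpha>' \<beta>' g :: "'a::field"
  assumes "g ^ Q \<noteq> g" "(2::'a) \<noteq> 0"
    and "\<forall>c. 2*(\<alpha>*c + \<beta>*c^Q) = 2*(\<alpha>'*c + \<beta>'*c^Q)"
  shows "\<alpha> = \<alpha>' \<and> \<beta> = \<beta>'"
proof -
  have e1: "\<alpha> + \<beta> = \<alpha>' + \<beta>'" using assms(3)[rule_format, of 1] assms(2)
    by (metis distrib_left mult_cancel_left power_one mult_1_right)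
  have e2: "\<alpha>*g + \<beta>*g^Q = \<alpha>'*g + \<beta>'*g^Q" using assms(3)[rule_format, of g] assms(2)
    by (metis distrib_left mult_cancel_left)
  have "(\<beta> - \<beta>') * (g^Q - g) = 0"
  proof -
    have h: "\<alpha> - \<alpha>' = \<beta>' - \<beta>" using e1 by (simp add: algebra_simps)
    have e3: "(\<alpha> - \<alpha>')*g + (\<beta> - \<beta>')*g^Q = 0" using e2 by (simp add: algebra_simps)
    hence "(\<beta>' - \<beta>)*g + (\<beta> - \<beta>')*g^Q = 0" by (simp only: h)
    thus ?thesis by (simp add: algebra_simps)
  qed
  hence "\<beta> = \<beta>'" using assms(1) by simp
  thus ?thesis using e1 by simp
qed

theorem mainTheorem4:
  fixes p r :: nat
  assumes "prime p" and "p \<ge> 5" and "r > 0"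
    and "\<not> (3 dvd (p ^ r + 1))"
    and "card (UNIV :: 'a set) = p ^ (2 * r)"
  shows "\<not> EA_equivalent (\<lambda>x::'a::{field,finite}. x ^ (p ^ r + 2)) (\<lambda>x. x ^ 3)"
proof
  assume "EA_equivalent (\<lambda>x::'a::{field,finite}. x ^ (p ^ r + 2)) (\<lambda>x. x ^ 3)"
  then obtain l1 l2 l3 where aff: "affine l1" "affine l2" "affine l3"
    and eq: "\<forall>x::'a. x ^ (p ^ r + 2) = l1 ((l2 x) ^ 3) + l3 x"
    unfolding EA_equivalent_def by blast
  obtain L1 c1 where L1: "Defs.additive L1" "\<forall>x. l1 x = L1 x + c1" using aff(1) unfolding Defs.affine_def by blast
  obtain L2 d where L2: "Defs.additive L2" "\<forall>x. l2 x = L2 x + d" using aff(2) unfolding Defs.affine_def by blast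
  obtain L3 c3 where L3: "Defs.additive L3" "\<forall>x. l3 x = L3 x + c3" using aff(3) unfolding Defs.affine_def by blast
  define Q where "Q = p ^ r"
  have finU: "finite (UNIV :: 'a set)" by simp
  have "CHAR('a) > 0" using finite_imp_CHAR_pos[OF finU] by simp
  hence primeC: "prime CHAR('a)" using prime_CHAR_semidom by blast
  have "CHAR('a) dvd p ^ (2*r)" using CHAR_dvd_CARD[where 'a='a] assms(5) by simp
  hence "CHAR('a) dvd p" using primeC prime_dvd_power by blast
  hence charp: "CHAR('a) = p" using primeC assms(1)
    by (metis prime_nat_iff not_prime_1)
  have frob: "\<And>x y::'a. (x + y) ^ Q = x ^ Q + y ^ Q"
    using freshmans_dream'[OF primeC] charp Q_def by blast
  have Qpos: "Q > 0" using Q_def assms(1) prime_gt_0_nat by simp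
  have Q0: "(0::'a) ^ Q = 0" using Qpos by simp
  have two: "(2::'a) \<noteq> 0"
  proof
    assume "(2::'a) = 0"
    hence "(of_nat 2::'a) = 0" by simp
    hence "CHAR('a) dvd 2" using of_nat_eq_0_iff_char_dvd by blast
    thus False using charp assms(2) by (auto dest: dvd_imp_le)
  qed
  have "\<exists>g::'a. g ^ Q \<noteq> g"
  proof (rule ccontr)
    assume "\<not> ?thesis"
    hence all: "\<forall>g::'a. g ^ Q = g" by blast
    have "p \<le> p ^ r" using self_le_power[of p r] assms(2,3) by simp
    hence Q2: "Q \<ge> 2" using Q_def assms(2) by simp
    define P where "P = monom (1::'a) Q + [:0, -1:]"
    have dP: "degree P = Q" unfolding P_def using Q2
      by (subst degree_add_eq_left) (auto simp: degree_monom_eq)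
    have "P \<noteq> 0" using dP Q2 by auto
    have "{x. poly P x = 0} = UNIV" using all by (auto simp: P_def poly_monom)
    hence "card (UNIV::'a set) \<le> Q" using card_poly_roots_bound[OF \<open>P \<noteq> 0\<close>] dP by simp
    moreover have "card (UNIV::'a set) = Q * Q" using assms(5) Q_def
      by (simp add: power_mult mult_2 power_add)
    ultimately show False using Q2 by (simp add: mult_le_cancel1)
  qed
  then obtain g :: 'a where g: "g ^ Q \<noteq> g" by blast
  have g0: "g \<noteq> 0" using g Q0 by auto
  have T: "\<And>a b c::'a. 2*(a^Q*b*c + b^Q*a*c + c^Q*a*b) = L1 (6*(L2 a * L2 b * L2 c))"
  proof -
    fix a b c :: 'a
    define f where "f = (\<lambda>x::'a. x ^ (p ^ r + 2))"
    define D where "D = f(a+b+c) - f(a+b) - f(a+c) - f(b+c) + f a + f b + f c - f 0"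
    have fQ: "\<And>x. f x = x^Q * x^2" unfolding f_def Q_def by (simp only: power_add)
    have "D = (a^Q+b^Q+c^Q)*(a+b+c)^2 - (a^Q+b^Q)*(a+b)^2 - (a^Q+c^Q)*(a+c)^2 - (b^Q+c^Q)*(b+c)^2
        + a^Q*a^2 + b^Q*b^2 + c^Q*c^2"
      unfolding D_def fQ frob using Q0 by simp
    also have "\<dots> = 2*(a^Q*b*c + b^Q*a*c + c^Q*a*b)" by (rule quad_delta)
    finally have D1: "D = 2*(a^Q*b*c + b^Q*a*c + c^Q*a*b)" .
    have fE: "\<And>x. f x = L1 ((L2 x + d)^3) + c1 + L3 x + c3"
      using eq L1(2) L2(2) L3(2) unfolding f_def by simp
    let ?A = "L2 a" and ?B = "L2 b" and ?C = "L2 c"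
    have "D = L1 ((?A+?B+?C+d)^3) - L1 ((?A+?B+d)^3) - L1 ((?A+?C+d)^3) - L1 ((?B+?C+d)^3)
        + L1 ((?A+d)^3) + L1 ((?B+d)^3) + L1 ((?C+d)^3) - L1 (d^3)"
      unfolding D_def fE additive_add[OF L2(1)] additive_add[OF L3(1)] additive_0[OF L2(1)]
        additive_0[OF L3(1)] by (simp add: algebra_simps)
    also have "\<dots> = L1 ((?A+?B+?C+d)^3 - (?A+?B+d)^3 - (?A+?C+d)^3 - (?B+?C+d)^3
        + (?A+d)^3 + (?B+d)^3 + (?C+d)^3 - d^3)"
      by (simp add: additive_add[OF L1(1)] additive_diff[OF L1(1)])
    also have "\<dots> = L1 (6*(?A*?B*?C))" by (simp only: cube_delta)
    finally show "2*(a^Q*b*c + b^Q*a*c + c^Q*a*b) = L1 (6*(L2 a * L2 b * L2 c))"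
      using D1 by simp
  qed
  define \<Phi> where "\<Phi> = (\<lambda>a b. \<lambda>c::'a. 2*(a^Q*b*c + b^Q*a*c + c^Q*a*b))"
  define \<Psi> where "\<Psi> = (\<lambda>m. \<lambda>c::'a. L1 (6*(m * L2 c)))"
  have PhiPsi: "\<And>a b. \<Phi> a b = \<Psi> (L2 a * L2 b)"
    unfolding \<Phi>_def \<Psi>_def using T by (auto simp: mult.assoc)
  have Phi1: "\<And>b c. \<Phi> 1 b c = 2*((b + b^Q)*c + b*c^Q)"
    unfolding \<Phi>_def by (simp add: algebra_simps)
  have injPhi: "inj (\<lambda>b. \<Phi> 1 b)"
  proof (rule injI)
    fix b b' assume "\<Phi> 1 b = \<Phi> 1 b'"
    hence "\<forall>c. 2*((b + b^Q)*c + b*c^Q) = 2*((b' + b'^Q)*c + b'*c^Q)"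
      using Phi1 by metis
    thus "b = b'" using decode[OF g two] by blast
  qed
  have "inj (\<lambda>b. L2 1 * L2 b)"
  proof (rule injI)
    fix b b' assume "L2 1 * L2 b = L2 1 * L2 b'"
    hence "\<Phi> 1 b = \<Phi> 1 b'" using PhiPsi by metis
    thus "b = b'" using injPhi by (auto dest: injD)
  qed
  hence "surj (\<lambda>b. L2 1 * L2 b)" using finite_UNIV_inj_surj[OF finU] by blast
  then obtain b where b: "L2 1 * L2 b = L2 g * L2 (inverse g)" by (metis surjD)
  hence "\<Phi> 1 b = \<Phi> g (inverse g)" using PhiPsi by metis
  moreover have "\<And>c. \<Phi> g (inverse g) c = 2*((g^Q * inverse g + inverse (g^Q) * g)*c + 1*c^Q)"
    unfolding \<Phi>_def using g0 by (simp add: algebra_simps power_inverse)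
  ultimately have "\<forall>c. 2*((b + b^Q)*c + b*c^Q) = 2*((g^Q * inverse g + inverse (g^Q) * g)*c + 1*c^Q)"
    using Phi1 by metis
  hence dd: "b + b^Q = g^Q * inverse g + inverse (g^Q) * g" "b = 1"
    using decode[OF g two] by blast+
  define t where "t = g^Q * inverse g"
  have gQ0: "g^Q \<noteq> 0" using g0 by simp
  have t0: "t \<noteq> 0" using g0 gQ0 t_def by simp
  have "inverse (g^Q) * g = inverse t" unfolding t_def using g0 gQ0 by (simp add: field_simps)
  hence "2 = t + inverse t" using dd by (simp add: t_def)
  hence "t * t - 2 * t + 1 = 0" using t0 by (simp add: field_simps)
  hence "(t - 1)^2 = 0" by (simp add: power2_eq_square algebra_simps)
  hence "t = 1" by simp
  hence "g^Q = g" unfolding t_def using g0 by (simp add: field_simps)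
  thus False using g by simp
qed

end
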